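(* Let $\alpha>-1$, $0\le\gamma<2+\alpha$, $\beta\in\{0,1/3\}$, and let $\sigma$ be a weight on $\mathcal H$. There is a constant $C>0$ (independent of $f$ and $\lambda$) such that for every $f$ and every $\lambda>0$, $$|\{z\in\mathcal H:\mathcal M^{d,\beta}_{\sigma,\alpha,\gamma}f(z)>\lambda\}|_{\sigma,\alpha}\le C\left(\frac1\lambda\int_{\mathcal H}|f|\sigma\,dV_\alpha\right)^{\frac{2+\alpha}{2+\alpha-\gamma}}.$$
   Context: $\mathcal H=\{x+iy:x\in\mathbb R,\ y>0\}$; for $\alpha>-1$, $dV_\alpha(x+iy)=y^\alpha dx\,dy$. A weight is a nonnegative locally integrable function; $|E|_{\sigma,\alpha}=\int_E\sigma dV_\alpha$. For an interval $I$, $Q_I=\{x+iy:x\in I,0<y<|I|\}$. For $\beta\in\{0,1/3\}$, the dyadic grid is $\mathcal D^\beta=\{2^j([0,1)+m+(-1)^j\beta): m\in\mathbb Z, j\in\mathbb Z\}$. The dyadic weighted fractional maximal function is $\mathcal M^{d,\beta}_{\sigma,\alpha,\gamma}f(z)=\sup_{I\in\mathcal D^\beta,\ z\in Q_I}\frac{1}{|Q_I|_{\sigma,\alpha}^{1-\frac{\gamma}{2+\alpha}}}\int_{Q_I}|f|\sigma\,dV_\alpha$. *)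

theory Defs
  imports "HOL-Analysis.Analysis"
begin

definition upper_half :: "complex set" where
  "upper_half = {z. 0 < Im z}"

text \<open>Real power on extended nonnegative reals (exponent p > 0 in all uses):
  infinity goes to infinity, finite values use real powr (with 0 powr p = 0).\<close>
definition ennpow :: "ennreal \<Rightarrow> real \<Rightarrow> ennreal" where
  "ennpow x p = (if x = top then top else ennreal (enn2real x powr p))"

definition is_weight :: "(complex \<Rightarrow> real) \<Rightarrow> bool" where
  "is_weight \<sigma> \<longleftrightarrow> \<sigma> \<in> borel_measurable lborel \<and> (\<forall>z\<in>upper_half. 0 \<le> \<sigma> z) \<and>
     (\<forall>K. compact K \<and> K \<subseteq> upper_half \<longrightarrow> set_integrable lborel K \<sigma>)"

definition wmeas :: "real \<Rightarrow> (complex \<Rightarrow> real) \<Rightarrow> complex set \<Rightarrow> ennreal" where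
  "wmeas \<alpha> \<sigma> E = (\<integral>\<^sup>+ z. ennreal (\<sigma> z * Im z powr \<alpha>) * indicator (E \<inter> upper_half) z \<partial>lborel)"

definition wint :: "real \<Rightarrow> (complex \<Rightarrow> real) \<Rightarrow> (complex \<Rightarrow> real) \<Rightarrow> complex set \<Rightarrow> ennreal" where
  "wint \<alpha> \<sigma> f E = (\<integral>\<^sup>+ z. ennreal (\<bar>f z\<bar> * \<sigma> z * Im z powr \<alpha>) * indicator (E \<inter> upper_half) z \<partial>lborel)"

definition dyadic_grid :: "real \<Rightarrow> real set set" where
  "dyadic_grid \<beta> = {{2 powr j * (of_int m + (-1) powi j * \<beta>) ..< 2 powr j * (of_int m + 1 + (-1) powi j * \<beta>)}
                     | j m :: int. True}"

definition carleson_box :: "real set \<Rightarrow> complex set" where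
  "carleson_box I = {z. Re z \<in> I \<and> 0 < Im z \<and> Im z < measure lborel I}"

definition dyadic_max :: "real \<Rightarrow> (complex \<Rightarrow> real) \<Rightarrow> real \<Rightarrow> real \<Rightarrow> (complex \<Rightarrow> real) \<Rightarrow> complex \<Rightarrow> ennreal" where
  "dyadic_max \<beta> \<sigma> \<alpha> \<gamma> f z =
     (SUP I \<in> {I \<in> dyadic_grid \<beta>. z \<in> carleson_box I}.
        wint \<alpha> \<sigma> f (carleson_box I) / ennpow (wmeas \<alpha> \<sigma> (carleson_box I)) (1 - \<gamma> / (2 + \<alpha>)))"

end

theory Submission imports Defs begin
lemma floor_half: "\<lfloor>(y::real) / 2\<rfloor> = \<lfloor>y\<rfloor> div 2"
proof -
  define n where "n = \<lfloor>y\<rfloor>"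
  define k where "k = n div 2"
  have "2 * k \<le> n" "n \<le> 2*k+1" unfolding k_def by presburger+
  moreover have "of_int n \<le> y" "y < of_int n + 1" unfolding n_def by linarith+
  ultimately have a: "real_of_int (2 * k) \<le> real_of_int n" "real_of_int n \<le> real_of_int (2*k+1)"
    and b: "real_of_int n \<le> y" "y < real_of_int n + 1"
    by (simp_all only: of_int_le_iff)
  then have "of_int k \<le> y/2" "y / 2 < of_int k + 1" by simp_all
  then show ?thesis unfolding k_def n_def by (simp add: floor_eq_iff)
qed
lemma m1: "(-1::real) powi j = 1 \<or> (-1::real) powi j = -1"
  by (cases "even j") (auto simp: power_int_minus_left)

definition sg :: "real \<Rightarrow> int \<Rightarrow> real" where "sg \<beta> j = (-1) powi j * \<beta>"
definition idx :: "real \<Rightarrow> int \<Rightarrow> real \<Rightarrow> int" where "idx \<beta> j x = \<lfloor>x / 2 powr j - sg \<beta> j\<rfloor>"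
definition DI :: "real \<Rightarrow> int \<Rightarrow> int \<Rightarrow> real set" where
  "DI \<beta> j m = {2 powr j * (of_int m + (-1) powi j * \<beta>) ..< 2 powr j * (of_int m + 1 + (-1) powi j * \<beta>)}"

lemma grid_eq: "dyadic_grid \<beta> = {DI \<beta> j m | j m. True}"
  unfolding dyadic_grid_def DI_def by simp

lemma mem_DI: "x \<in> DI \<beta> j m \<longleftrightarrow> idx \<beta> j x = m"
proof -
  have p: "(2::real) powr j > 0" by simp
  have "x \<in> DI \<beta> j m \<longleftrightarrow> of_int m \<le> x / 2 powr j - sg \<beta> j \<and> x / 2 powr j - sg \<beta> j < of_int m + 1"
    unfolding DI_def sg_def using p by (auto simp: field_simps)
  then show ?thesis unfolding idx_def by (simp add: floor_eq_iff)
qed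

lemma meas_DI: "measure lborel (DI \<beta> j m) = 2 powr j"
  unfolding DI_def by (simp add: algebra_simps)

lemma box_mem: "z \<in> carleson_box (DI \<beta> j m) \<longleftrightarrow> idx \<beta> j (Re z) = m \<and> 0 < Im z \<and> Im z < 2 powr j"
  unfolding carleson_box_def meas_DI mem_DI by simp

lemma box_sets: "carleson_box {a..<b} \<in> sets lborel"
  unfolding carleson_box_def by measurable

lemma nest_step:
  assumes "\<beta> \<in> {0, 1/3}"
  shows "\<exists>e::int. \<forall>x. idx \<beta> (j+1) x = (idx \<beta> j x + e) div 2"
proof -
  have s1: "sg \<beta> (j+1) = - sg \<beta> j" unfolding sg_def by (simp add: power_int_add)
  obtain e :: int where e: "of_int e = 3 * sg \<beta> j"
  proof -
    have "\<exists>e::int. of_int e = 3 * sg \<beta> j"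
      using assms m1[of j] unfolding sg_def
      by (auto intro: exI[of _ 0] exI[of _ 1] exI[of _ "-1"])
    then show ?thesis using that by blast
  qed
  have "idx \<beta> (j+1) x = (idx \<beta> j x + e) div 2" for x
  proof -
    have "x / 2 powr (j+1) - sg \<beta> (j+1) = ((x / 2 powr j - sg \<beta> j) + of_int e) / 2"
      using s1 e by (simp add: powr_add field_simps)
    then have "idx \<beta> (j+1) x = \<lfloor>(x / 2 powr j - sg \<beta> j) + of_int e\<rfloor> div 2"
      unfolding idx_def by (metis floor_half)
    then show ?thesis unfolding idx_def by simp
  qed
  then show ?thesis by blast
qed

lemma nest:
  assumes "\<beta> \<in> {0, 1/3}" "j \<le> k" "idx \<beta> j x = idx \<beta> j y"
  shows "idx \<beta> k x = idx \<beta> k y"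
proof -
  obtain n :: nat where k: "k = j + int n" using assms(2) by (metis le_add_diff_inverse zle_iff_zadd)
  have "idx \<beta> (j + int n) x = idx \<beta> (j + int n) y" for n
  proof (induction n)
    case 0 then show ?case using assms(3) by simp
  next
    case (Suc n)
    obtain e where "\<forall>x. idx \<beta> (j + int n + 1) x = (idx \<beta> (j + int n) x + e) div 2"
      using nest_step[OF assms(1)] by blast
    then have "idx \<beta> (j + int n + 1) x = idx \<beta> (j + int n + 1) y" using Suc by simp
    moreover have "j + int (Suc n) = j + int n + 1" by simp
    ultimately show ?case by metis
  qed
  then show ?thesis using k by simp
qed
lemma box_bound:
  fixes w m :: ennreal
  assumes t: "t > 0" and F: "F \<ge> 0" and p: "0 < p" "p \<le> 1" and wF: "w \<le> ennreal F" and m0: "m = 0 \<Longrightarrow> w = 0"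
   and r: "ennreal t < w / ennpow m p"
  shows "m \<le> ennreal ((F/t) powr (1/p - 1) / t) * w"
proof -
  have mt: "m \<noteq> top" using r unfolding ennpow_def by auto
  have mz: "m \<noteq> 0" using r m0 unfolding ennpow_def by auto
  obtain mr where mr: "m = ennreal mr" "mr > 0" using mt mz
    by (cases m) (auto simp: less_le)
  obtain wr where wr0: "w = ennreal wr" "wr \<ge> 0"
    using wF by (cases w) (auto simp: top_unique)
  have wr: "w = ennreal wr" "wr \<ge> 0" "wr \<le> F" using wr0 wF F by (auto simp: ennreal_le_iff)
  have pp: "mr powr p > 0" using mr by simp
  have "ennpow m p = ennreal (mr powr p)" unfolding ennpow_def using mr by simp
  then have "w / ennpow m p = ennreal (wr / mr powr p)" using wr pp by (simp add: divide_ennreal)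
  then have "t < wr / mr powr p" using r wr pp t by (simp add: ennreal_less_iff)
  then have A: "mr powr p < wr / t" using t pp by (simp add: field_simps)
  have B: "wr / t \<le> F / t" using wr t by (simp add: divide_right_mono)
  have "mr powr (1 - p) = (mr powr p) powr ((1-p)/p)" using p by (simp add: powr_powr)
  also have "\<dots> \<le> (F/t) powr ((1-p)/p)"
    by (rule powr_mono2) (use p A B in auto)
  also have "(1-p)/p = 1/p - 1" using p by (simp add: field_simps)
  finally have C: "mr powr (1-p) \<le> (F/t) powr (1/p - 1)" .
  have "mr = mr powr p * mr powr (1-p)" using mr by (simp add: powr_add[symmetric])
  also have "\<dots> \<le> (wr / t) * (F/t) powr (1/p - 1)"
    by (rule mult_mono) (use A C wr t in auto)
  finally have "mr \<le> (F/t) powr (1/p - 1) / t * wr" by (simp add: mult.commute)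
  then show ?thesis using mr wr t by (simp add: ennreal_mult[symmetric])
qed

lemma uh_sets[measurable]: "upper_half \<in> sets borel"
  unfolding upper_half_def by measurable

lemma wmeas_eq:
  assumes "\<sigma> \<in> borel_measurable borel" "A \<in> sets borel"
  shows "wmeas \<alpha> \<sigma> A = emeasure (density lborel (\<lambda>z. ennreal (\<sigma> z * Im z powr \<alpha>) * indicator upper_half z)) A"
  using assms unfolding wmeas_def
  by (subst emeasure_density) (auto intro!: nn_integral_cong split: split_indicator)

lemma wint_eq:
  assumes "\<sigma> \<in> borel_measurable borel" "f \<in> borel_measurable borel" "A \<in> sets borel"
  shows "wint \<alpha> \<sigma> f A = emeasure (density lborel (\<lambda>z. ennreal (\<bar>f z\<bar> * \<sigma> z * Im z powr \<alpha>) * indicator upper_half z)) A"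
  using assms unfolding wint_def
  by (subst emeasure_density) (auto intro!: nn_integral_cong split: split_indicator)

lemma wint_zero:
  assumes s: "\<sigma> \<in> borel_measurable borel" and f: "f \<in> borel_measurable borel" and A: "A \<in> sets borel"
    and pos: "\<forall>z\<in>upper_half. 0 \<le> \<sigma> z" and z: "wmeas \<alpha> \<sigma> A = 0"
  shows "wint \<alpha> \<sigma> f A = 0"
proof -
  have "AE z in lborel. ennreal (\<sigma> z * Im z powr \<alpha>) * indicator (A \<inter> upper_half) z = 0"
    using z s A unfolding wmeas_def by (subst (asm) nn_integral_0_iff_AE) auto
  then have "AE z in lborel. ennreal (\<bar>f z\<bar> * \<sigma> z * Im z powr \<alpha>) * indicator (A \<inter> upper_half) z = 0"
  proof (rule eventually_mono)
    fix z assume h: "ennreal (\<sigma> z * Im z powr \<alpha>) * indicator (A \<inter> upper_half) z = 0"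
    show "ennreal (\<bar>f z\<bar> * \<sigma> z * Im z powr \<alpha>) * indicator (A \<inter> upper_half) z = 0"
    proof (cases "z \<in> A \<inter> upper_half")
      case True
      then have "\<sigma> z * Im z powr \<alpha> \<le> 0" using h by (simp add: ennreal_eq_0_iff)
      moreover have "\<sigma> z * Im z powr \<alpha> \<ge> 0" using True pos by simp
      ultimately have "\<sigma> z * Im z powr \<alpha> = 0" by simp
      then have "\<bar>f z\<bar> * \<sigma> z * Im z powr \<alpha> = 0" by (simp add: mult.assoc)
      then show ?thesis by (metis ennreal_0 mult_zero_left)
    qed simp
  qed
  then show ?thesis using s f A unfolding wint_def by (subst nn_integral_0_iff_AE) auto
qed

theorem proposition4p2:
  fixes \<alpha> \<gamma> \<beta> :: real and \<sigma> :: "complex \<Rightarrow> real"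
  assumes "\<alpha> > -1" and "0 \<le> \<gamma>" and "\<gamma> < 2 + \<alpha>" and "\<beta> \<in> {0, 1/3}"
    and "is_weight \<sigma>"
  shows "\<exists>C::real. C > 0 \<and>
    (\<forall>(f :: complex \<Rightarrow> real) (t::real). f \<in> borel_measurable lborel \<longrightarrow> t > 0 \<longrightarrow>
       wmeas \<alpha> \<sigma> {z \<in> upper_half. dyadic_max \<beta> \<sigma> \<alpha> \<gamma> f z > ennreal t}
       \<le> ennreal C * ennpow (ennreal (1 / t) * wint \<alpha> \<sigma> f UNIV) ((2 + \<alpha>) / (2 + \<alpha> - \<gamma>)))"
proof (intro exI[of _ 1] conjI allI impI)
  fix f :: "complex \<Rightarrow> real" and t :: real
  assume fm0: "f \<in> borel_measurable lborel" and t: "t > 0"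
  have sm: "\<sigma> \<in> borel_measurable borel" and pos: "\<forall>z\<in>upper_half. 0 \<le> \<sigma> z"
    using assms(5) unfolding is_weight_def by auto
  have fm: "f \<in> borel_measurable borel" using fm0 by simp
  define p where "p = 1 - \<gamma> / (2 + \<alpha>)"
  have p: "0 < p" "p \<le> 1" using assms(1-3) unfolding p_def by (auto simp: field_simps)
  have q: "(2 + \<alpha>) / (2 + \<alpha> - \<gamma>) = 1 / p" using assms(1-3) unfolding p_def by (auto simp: field_simps)
  define M1 where "M1 = density lborel (\<lambda>z. ennreal (\<sigma> z * Im z powr \<alpha>) * indicator upper_half z)"
  define M2 where "M2 = density lborel (\<lambda>z. ennreal (\<bar>f z\<bar> * \<sigma> z * Im z powr \<alpha>) * indicator upper_half z)"
  have W1: "A \<in> sets borel \<Longrightarrow> wmeas \<alpha> \<sigma> A = emeasure M1 A" for A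
    unfolding M1_def using wmeas_eq[OF sm] by blast
  have W2: "A \<in> sets borel \<Longrightarrow> wint \<alpha> \<sigma> f A = emeasure M2 A" for A
    unfolding M2_def using wint_eq[OF sm fm] by blast
  have sM1: "sets M1 = sets borel" and sM2: "sets M2 = sets borel" unfolding M1_def M2_def by auto
  define F where "F = wint \<alpha> \<sigma> f UNIV"
  define E where "E = {z \<in> upper_half. dyadic_max \<beta> \<sigma> \<alpha> \<gamma> f z > ennreal t}"
  show "wmeas \<alpha> \<sigma> E \<le> ennreal 1 * ennpow (ennreal (1 / t) * F) ((2 + \<alpha>) / (2 + \<alpha> - \<gamma>))"
  proof (cases "F = top")
    case True
    then show ?thesis using t unfolding ennpow_def by (simp add: ennreal_mult_top)
  next
    case False
    then obtain Fr where Fr: "F = ennreal Fr" "Fr \<ge> 0" by (cases F) auto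
    define R where "R I = wint \<alpha> \<sigma> f (carleson_box I) / ennpow (wmeas \<alpha> \<sigma> (carleson_box I)) p" for I
    define G where "G = {(j, m). ennreal t < R (DI \<beta> j m)}"
    define Q where "Q = (\<lambda>(j, m). carleson_box (DI \<beta> j m))"
    have Qs: "Q s \<in> sets borel" for s
      unfolding Q_def DI_def using box_sets by (auto split: prod.split)
    have E_eq: "E = \<Union>(Q ` G)"
    proof -
      have "z \<in> E \<longleftrightarrow> (\<exists>s\<in>G. z \<in> Q s)" for z
      proof -
        have "z \<in> E \<longleftrightarrow> z \<in> upper_half \<and> (\<exists>I\<in>{I \<in> dyadic_grid \<beta>. z \<in> carleson_box I}. ennreal t < R I)"
          unfolding E_def dyadic_max_def R_def p_def by (simp add: less_SUP_iff)
        also have "\<dots> \<longleftrightarrow> (\<exists>j m. z \<in> carleson_box (DI \<beta> j m) \<and> ennreal t < R (DI \<beta> j m))"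
          unfolding grid_eq using box_mem unfolding upper_half_def by blast
        also have "\<dots> \<longleftrightarrow> (\<exists>s\<in>G. z \<in> Q s)" unfolding G_def Q_def by auto
        finally show ?thesis .
      qed
      then show ?thesis by blast
    qed
    have Esets: "E \<in> sets borel" unfolding E_eq
      by (intro sets.countable_UN') (auto intro: Qs countable_subset[OF subset_UNIV])
    define K where "K = (Fr / t) powr (1 / p - 1) / t"
    have boxb: "emeasure M1 (Q s) \<le> ennreal K * emeasure M2 (Q s)" if s: "s \<in> G" for s
    proof -
      obtain j m where sj: "s = (j, m)" by (cases s)
      have "wmeas \<alpha> \<sigma> (Q s) \<le> ennreal K * wint \<alpha> \<sigma> f (Q s)"
        unfolding K_def
      proof (rule box_bound[OF t Fr(2) p])
        show "wint \<alpha> \<sigma> f (Q s) \<le> ennreal Fr"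
          using W2[OF Qs] W2[of UNIV] Fr unfolding F_def
          by (metis emeasure_mono sM2 sets.top space_borel subset_UNIV Qs)
        show "wmeas \<alpha> \<sigma> (Q s) = 0 \<Longrightarrow> wint \<alpha> \<sigma> f (Q s) = 0"
          using wint_zero[OF sm fm Qs pos] by blast
        show "ennreal t < wint \<alpha> \<sigma> f (Q s) / ennpow (wmeas \<alpha> \<sigma> (Q s)) p"
          using s unfolding G_def sj Q_def R_def by simp
      qed
      then show ?thesis using W1[OF Qs] W2[OF Qs] by simp
    qed
    define EN where "EN n = \<Union>(Q ` {s \<in> G. fst s \<le> int n})" for n :: nat
    have ENs: "EN n \<in> sets borel" for n unfolding EN_def
      by (intro sets.countable_UN') (auto intro: Qs countable_subset[OF subset_UNIV])
    have ENinc: "incseq EN" unfolding EN_def incseq_def by force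
    have ENU: "(\<Union>n. EN n) = E" unfolding E_eq EN_def
    proof safe
      fix z j m assume h: "(j, m) \<in> G" "z \<in> Q (j, m)"
      then have "(j, m) \<in> {s \<in> G. fst s \<le> int (nat \<bar>j\<bar>)}" by simp
      then show "z \<in> (\<Union>n. \<Union> (Q ` {s \<in> G. fst s \<le> int n}))" using h(2) by blast
    qed auto
    have ENb: "emeasure M1 (EN n) \<le> ennreal K * F" for n
    proof -
      define S where "S = {(k, m). (k, m) \<in> G \<and> k \<le> int n \<and>
          (\<forall>k' x. k < k' \<and> k' \<le> int n \<and> idx \<beta> k x = m \<longrightarrow> (k', idx \<beta> k' x) \<notin> G)}"
      have ENS: "EN n = \<Union>(Q ` S)"
      proof
        show "\<Union>(Q ` S) \<subseteq> EN n" unfolding EN_def S_def by force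
      next
        show "EN n \<subseteq> \<Union>(Q ` S)"
        proof
          fix z assume "z \<in> EN n"
          then obtain j m where jm: "(j, m) \<in> G" "j \<le> int n" "z \<in> Q (j, m)" unfolding EN_def by auto
          have zb: "idx \<beta> j (Re z) = m" "0 < Im z" "Im z < 2 powr j"
            using jm(3) box_mem unfolding Q_def by auto
          define Kset where "Kset = {k. j \<le> k \<and> k \<le> int n \<and> (k, idx \<beta> k (Re z)) \<in> G}"
          have fin: "finite Kset" unfolding Kset_def by (rule finite_subset[of _ "{j..int n}"]) auto
          have ne: "j \<in> Kset" unfolding Kset_def using jm zb by auto
          define k where "k = Max Kset"
          have kK: "k \<in> Kset" unfolding k_def using fin ne by (intro Max_in) auto
          have kmax: "k' \<in> Kset \<Longrightarrow> k' \<le> k" for k' unfolding k_def using fin by (rule Max_ge)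
          have jk: "j \<le> k" using kmax ne by simp
          have "(k, idx \<beta> k (Re z)) \<in> S"
            unfolding S_def
          proof (clarsimp, intro conjI allI impI)
            show "(k, idx \<beta> k (Re z)) \<in> G" "k \<le> int n" using kK unfolding Kset_def by auto
            fix k' x assume h: "k < k' \<and> k' \<le> int n \<and> idx \<beta> k x = idx \<beta> k (Re z)"
            have "idx \<beta> k' x = idx \<beta> k' (Re z)" using nest[OF assms(4), of k k' x "Re z"] h by simp
            moreover have "(k', idx \<beta> k' (Re z)) \<notin> G"
              using kmax[of k'] h jk unfolding Kset_def by force
            ultimately show "(k', idx \<beta> k' x) \<notin> G" by simp
          qed
          moreover have "z \<in> Q (k, idx \<beta> k (Re z))"
          proof -
            have hk: "(2::real) powr j \<le> 2 powr k" using jk by simp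
            have "Im z < 2 powr k" using less_le_trans[OF zb(3) hk] .
            then show ?thesis unfolding Q_def using zb box_mem by simp
          qed
          ultimately show "z \<in> \<Union>(Q ` S)" by blast
        qed
      qed
      have disj: "disjoint_family_on Q S"
        unfolding disjoint_family_on_def
      proof (intro ballI impI)
        fix a b assume a: "a \<in> S" and b: "b \<in> S" and ab: "a \<noteq> b"
        show "Q a \<inter> Q b = {}"
        proof (rule ccontr)
          assume "Q a \<inter> Q b \<noteq> {}"
          then obtain z where z: "z \<in> Q a" "z \<in> Q b" by blast
          obtain k1 m1 k2 m2 where ab': "a = (k1, m1)" "b = (k2, m2)" by (cases a, cases b)
          have i1: "idx \<beta> k1 (Re z) = m1" and i2: "idx \<beta> k2 (Re z) = m2"
            using z box_mem unfolding ab' Q_def by auto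
          consider "k1 = k2" | "k1 < k2" | "k2 < k1" by linarith
          then show False
          proof cases
            case 1 then show ?thesis using i1 i2 ab ab' by simp
          next
            case 2 then show ?thesis using a b i1 i2 unfolding ab' S_def by blast
          next
            case 3 then show ?thesis using a b i1 i2 unfolding ab' S_def by blast
          qed
        qed
      qed
      have cS: "countable S" by (rule countable_subset[OF subset_UNIV]) simp
      have QsM: "s \<in> S \<Longrightarrow> Q s \<in> sets M1" "s \<in> S \<Longrightarrow> Q s \<in> sets M2" for s using Qs sM1 sM2 by auto
      have "emeasure M1 (EN n) = (\<integral>\<^sup>+s. emeasure M1 (Q s) \<partial>count_space S)"
        unfolding ENS by (rule emeasure_UN_countable[OF QsM(1) cS disj])
      also have "\<dots> \<le> (\<integral>\<^sup>+s. ennreal K * emeasure M2 (Q s) \<partial>count_space S)"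
        by (rule nn_integral_mono) (use boxb S_def in auto)
      also have "\<dots> = ennreal K * (\<integral>\<^sup>+s. emeasure M2 (Q s) \<partial>count_space S)"
        by (rule nn_integral_cmult) simp
      also have "(\<integral>\<^sup>+s. emeasure M2 (Q s) \<partial>count_space S) = emeasure M2 (\<Union>(Q ` S))"
        by (rule emeasure_UN_countable[OF QsM(2) cS disj, symmetric])
      also have "\<dots> \<le> emeasure M2 UNIV"
        by (rule emeasure_mono) (auto simp: sM2)
      also have "emeasure M2 UNIV = F" unfolding F_def using W2[of UNIV] by simp
      finally show ?thesis by (simp add: mult_left_mono)
    qed
    have "wmeas \<alpha> \<sigma> E = emeasure M1 E" using W1[OF Esets] .
    also have "\<dots> = (SUP n. emeasure M1 (EN n))"
    proof -
      have "range EN \<subseteq> sets M1" using ENs sM1 by auto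
      then show ?thesis using SUP_emeasure_incseq[of EN M1] ENinc ENU by simp
    qed
    also have "\<dots> \<le> ennreal K * F" by (rule SUP_least) (rule ENb)
    also have "\<dots> \<le> ennreal 1 * ennpow (ennreal (1 / t) * F) ((2 + \<alpha>) / (2 + \<alpha> - \<gamma>))"
    proof (cases "Fr = 0")
      case True then show ?thesis using Fr by simp
    next
      case False
      then have Fp: "Fr / t > 0" using Fr t by simp
      have "ennreal (1 / t) * F = ennreal (Fr / t)" using Fr t by (simp add: ennreal_mult[symmetric])
      then have "ennpow (ennreal (1 / t) * F) ((2 + \<alpha>) / (2 + \<alpha> - \<gamma>)) = ennreal ((Fr / t) powr (1 / p))"
        unfolding ennpow_def q using Fp by simp
      moreover have "K * Fr = (Fr / t) powr (1 / p)"
      proof -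
        have "K * Fr = (Fr / t) powr (1 / p - 1) * (Fr / t)" unfolding K_def by simp
        also have "\<dots> = (Fr / t) powr (1 / p - 1) * (Fr / t) powr 1" by (subst powr_one) (use Fp in auto)
        also have "\<dots> = (Fr / t) powr (1 / p)" by (simp only: powr_add[symmetric]) simp
        finally show ?thesis .
      qed
      ultimately show ?thesis using Fr t ennreal_mult[of K Fr] by (simp add: K_def)
    qed
    finally show ?thesis .
  qed
qed simp
end
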